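(* There exist a financial system $S$ in the base model (all contracts of the same priority), banks $u\neq v$ and a number $x>0$ such that: $S$ has exactly one solution $r$; the system $S'$ obtained from $S$ by replacing $e_u$ with $e_u+x$ (everything else unchanged) has exactly one solution $r'$; and $q'_v(r')>q_v(r)+x$, where $q_v$ and $q'_v$ denote the payoff of $v$ in $S$ and $S'$, respectively.
   Context: A financial system with payment priorities consists of: a finite set $V$ of banks; external assets $e_v\ge 0$ for each $v\in V$; a number $P\ge 1$ of priority levels; and a finite set of contracts, each of which is either a debt contract from a debtor $u$ to a creditor $v\neq u$ with weight $c>0$, or a credit default swap (CDS) from a debtor $u$ to a creditor $v\neq u$ in reference to a bank $w\notin\{u,v\}$ (the reference entity) with weight $c>0$. Every contract has a priority in $\{1,\dots,P\}$ (1 is the highest priority). It is assumed that every bank that is the reference entity of some CDS is the debtor of at least one debt contract of positive weight. Given a recovery rate vector $r\in[0,1]^V$: the liability of a contract $k$ is $l_k(r)=c$ if $k$ is a debt of weight $c$, and $l_k(r)=c\,(1-r_w)$ if $k$ is a CDS of weight $c$ in reference to $w$. For a bank $v$, $l_v(r)$ is the sum of the liabilities of the contracts with debtor $v$; $l_v^{(\rho)}(r)$ is the sum of the liabilities of contracts with debtor $v$ and priority $\rho$; and $l_v^{(\le\rho)}(r)=\sum_{i=1}^{\rho}l_v^{(i)}(r)$ (with $l_v^{(\le 0)}=0$). The payment on a contract $k$ with debtor $v$ and priority $\rho$ is $p_k(r)=l_k(r)\cdot\min\{1,\max\{0,(r_v l_v(r)-l_v^{(\le\rho-1)}(r))/l_v^{(\rho)}(r)\}\}$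 (and $p_k(r)=0$ if $l_v^{(\rho)}(r)=0$). The assets of $v$ are $a_v(r)=e_v+\sum_k p_k(r)$, summing over contracts $k$ with creditor $v$. A vector $r\in[0,1]^V$ is a solution (clearing vector) if for every $v\in V$: $r_v=1$ when $a_v(r)\ge l_v(r)$, and $r_v=a_v(r)/l_v(r)$ when $a_v(r)<l_v(r)$. The payoff of $v$ is $q_v(r)=\max\{a_v(r)-l_v(r),0\}$. When $P=1$, payments reduce to $p_k(r)=r_v\,l_k(r)$ (principle of proportionality); this is called the base model. *)

theory Defs
  imports Complex_Main
begin

datatype contract =
    Debt (debtor: nat) (creditor: nat) (weight: real) (prio: nat)
  | CDS (debtor: nat) (creditor: nat) (refent: nat) (weight: real) (prio: nat)

record fsys =
  banks :: "nat set"
  ext :: "nat \<Rightarrow> real"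
  nprio :: nat
  contracts :: "contract set"

definition wf_fsys :: "fsys \<Rightarrow> bool" where
  "wf_fsys S \<longleftrightarrow>
     finite (banks S) \<and> finite (contracts S) \<and> nprio S \<ge> 1 \<and>
     (\<forall>v\<in>banks S. ext S v \<ge> 0) \<and>
     (\<forall>k\<in>contracts S. debtor k \<in> banks S \<and> creditor k \<in> banks S \<and>
        debtor k \<noteq> creditor k \<and> weight k > 0 \<and> prio k \<in> {1..nprio S} \<and>
        (case k of Debt _ _ _ _ \<Rightarrow> True
         | CDS u v w _ _ \<Rightarrow> w \<in> banks S \<and> w \<noteq> u \<and> w \<noteq> v)) \<and>
     (\<forall>k\<in>contracts S. case k of Debt _ _ _ _ \<Rightarrow> True
        | CDS _ _ w _ _ \<Rightarrow> (\<exists>k'\<in>contracts S. is_Debt k' \<and> debtor k' = w \<and> weight k' > 0))"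

definition base_model :: "fsys \<Rightarrow> bool" where
  "base_model S \<longleftrightarrow> wf_fsys S \<and> nprio S = 1"

definition liab :: "(nat \<Rightarrow> real) \<Rightarrow> contract \<Rightarrow> real" where
  "liab r k = (case k of Debt _ _ c _ \<Rightarrow> c | CDS _ _ w c _ \<Rightarrow> c * (1 - r w))"

definition liab_bank :: "fsys \<Rightarrow> (nat \<Rightarrow> real) \<Rightarrow> nat \<Rightarrow> real" where
  "liab_bank S r v = (\<Sum>k\<in>{k\<in>contracts S. debtor k = v}. liab r k)"

definition liab_prio :: "fsys \<Rightarrow> (nat \<Rightarrow> real) \<Rightarrow> nat \<Rightarrow> nat \<Rightarrow> real" where
  "liab_prio S r v \<rho> = (\<Sum>k\<in>{k\<in>contracts S. debtor k = v \<and> prio k = \<rho>}. liab r k)"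

definition liab_upto :: "fsys \<Rightarrow> (nat \<Rightarrow> real) \<Rightarrow> nat \<Rightarrow> nat \<Rightarrow> real" where
  "liab_upto S r v \<rho> = (\<Sum>i\<in>{1..\<rho>}. liab_prio S r v i)"

definition payment :: "fsys \<Rightarrow> (nat \<Rightarrow> real) \<Rightarrow> contract \<Rightarrow> real" where
  "payment S r k =
     (let v = debtor k; \<rho> = prio k; L = liab_prio S r v \<rho> in
      if L = 0 then 0
      else liab r k * min 1 (max 0 ((r v * liab_bank S r v - liab_upto S r v (\<rho> - 1)) / L)))"

definition assets :: "fsys \<Rightarrow> (nat \<Rightarrow> real) \<Rightarrow> nat \<Rightarrow> real" where
  "assets S r v = ext S v + (\<Sum>k\<in>{k\<in>contracts S. creditor k = v}. payment S r k)"

definition is_solution :: "fsys \<Rightarrow> (nat \<Rightarrow> real) \<Rightarrow> bool" where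
  "is_solution S r \<longleftrightarrow>
     (\<forall>v\<in>banks S. 0 \<le> r v \<and> r v \<le> 1 \<and>
        (assets S r v \<ge> liab_bank S r v \<longrightarrow> r v = 1) \<and>
        (assets S r v < liab_bank S r v \<longrightarrow> r v = assets S r v / liab_bank S r v))"

text \<open>Recovery vectors are only meaningful on the banks; uniqueness is up to values on banks.\<close>
definition unique_solution :: "fsys \<Rightarrow> (nat \<Rightarrow> real) \<Rightarrow> bool" where
  "unique_solution S r \<longleftrightarrow> is_solution S r \<and>
     (\<forall>r'. is_solution S r' \<longrightarrow> (\<forall>v\<in>banks S. r' v = r v))"

definition payoff :: "fsys \<Rightarrow> (nat \<Rightarrow> real) \<Rightarrow> nat \<Rightarrow> real" where
  "payoff S r v = max (assets S r v - liab_bank S r v) 0"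

definition add_ext :: "fsys \<Rightarrow> nat \<Rightarrow> real \<Rightarrow> fsys" where
  "add_ext S u x = S\<lparr>ext := (ext S)(u := ext S u + x)\<rparr>"

end

theory Submission
  imports Defs
begin

definition Sys :: "(nat \<Rightarrow> real) \<Rightarrow> fsys" where
  "Sys E = \<lparr>banks = {0,1,2}, ext = E, nprio = 1,
     contracts = {Debt 0 2 1 1, CDS 1 2 0 2 1}\<rparr>"

lemma cset: "contracts (Sys E) = {Debt 0 2 1 1, CDS 1 2 0 2 1}" by (simp add: Sys_def)

lemma lb0: "liab_bank (Sys E) r 0 = 1"
proof -
  have "{k\<in>contracts (Sys E). debtor k = 0} = {Debt 0 2 1 1}" by (auto simp: cset)
  then show ?thesis unfolding liab_bank_def by (simp only:) (simp add: liab_def)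
qed

lemma lb1: "liab_bank (Sys E) r (Suc 0) = 2 * (1 - r 0)"
proof -
  have "{k\<in>contracts (Sys E). debtor k = Suc 0} = {CDS 1 2 0 2 1}" by (auto simp: cset)
  then show ?thesis unfolding liab_bank_def by (simp only:) (simp add: liab_def)
qed

lemma lb2: "liab_bank (Sys E) r 2 = 0"
proof -
  have "{k\<in>contracts (Sys E). debtor k = 2} = {}" by (auto simp: cset)
  then show ?thesis unfolding liab_bank_def by (simp only:) simp
qed

lemma as0: "assets (Sys E) r 0 = E 0"
proof -
  have "{k\<in>contracts (Sys E). creditor k = 0} = {}" by (auto simp: cset)
  then show ?thesis unfolding assets_def by (simp only:) (simp add: Sys_def)
qed

lemma as1: "assets (Sys E) r (Suc 0) = E 1"
proof -
  have "{k\<in>contracts (Sys E). creditor k = Suc 0} = {}" by (auto simp: cset)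
  then show ?thesis unfolding assets_def by (simp only:) (simp add: Sys_def)
qed

lemma pay_nn: "r 0 \<le> 1 \<Longrightarrow> k \<in> contracts (Sys E) \<Longrightarrow> payment (Sys E) r k \<ge> 0"
  by (auto simp: cset payment_def Let_def liab_def)

lemma as2: "r 0 \<le> 1 \<Longrightarrow> E 2 \<ge> 0 \<Longrightarrow> assets (Sys E) r 2 \<ge> 0"
  unfolding assets_def
  by (rule add_nonneg_nonneg, simp add: Sys_def, rule sum_nonneg, auto intro: pay_nn)

lemma sol:
  assumes "0 \<le> e" "e \<le> 1" "E 1 = 10" "E 0 = e" "E 2 = 0"
  shows "unique_solution (Sys E) (\<lambda>i. if i = 0 then e else 1)"
    and "payoff (Sys E) (\<lambda>i. if i = 0 then e else 1) 1 = 10 - 2 * (1 - e)"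
proof -
  have B: "banks (Sys E) = {0,1,2}" by (simp add: Sys_def)
  have S: "is_solution (Sys E) (\<lambda>i. if i = 0 then e else 1)"
    unfolding is_solution_def B using assms as2[of "\<lambda>i. if i = 0 then e else 1" E]
    by (auto simp: lb0 lb1 lb2 as0 as1)
  have U: "\<forall>v\<in>banks (Sys E). r' v = (if v = 0 then e else 1)" if "is_solution (Sys E) r'" for r'
  proof -
    have h: "\<And>v. v \<in> {0,1,2::nat} \<Longrightarrow> 0 \<le> r' v \<and> r' v \<le> 1 \<and>
        (assets (Sys E) r' v \<ge> liab_bank (Sys E) r' v \<longrightarrow> r' v = 1) \<and>
        (assets (Sys E) r' v < liab_bank (Sys E) r' v \<longrightarrow> r' v = assets (Sys E) r' v / liab_bank (Sys E) r' v)"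
      using that unfolding is_solution_def B by blast
    from h[of 0] have r0: "r' 0 = e" using assms by (auto simp: lb0 as0 split: if_splits)
    from h[of 1] have r1: "r' 1 = 1" using assms r0 by (auto simp: lb1 as1)
    from h[of 2] have r2: "r' 2 = 1" using assms r0 as2[of r' E] by (auto simp: lb2)
    show ?thesis using r0 r1 r2 B by auto
  qed
  show "unique_solution (Sys E) (\<lambda>i. if i = 0 then e else 1)"
    unfolding unique_solution_def using S U by blast
  show "payoff (Sys E) (\<lambda>i. if i = 0 then e else 1) 1 = 10 - 2 * (1 - e)"
    using assms by (simp add: payoff_def lb1[simplified] as1[simplified])
qed

lemma wf: "base_model (Sys E)" if "\<forall>v\<in>{0,1,2}. E v \<ge> 0"
  using that unfolding base_model_def wf_fsys_def by (auto simp: Sys_def)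

theorem mainTheorem3:
  shows "\<exists>S u v x r r'. base_model S \<and> u \<in> banks S \<and> v \<in> banks S \<and> u \<noteq> v \<and> x > 0 \<and>
     unique_solution S r \<and> unique_solution (add_ext S u x) r' \<and>
     payoff (add_ext S u x) r' v > payoff S r v + x"
proof -
  define E :: "nat \<Rightarrow> real" where "E = (\<lambda>i. if i = 1 then 10 else 0)"
  define E' :: "nat \<Rightarrow> real" where "E' = (\<lambda>i. if i = 1 then 10 else if i = 0 then 1/2 else 0)"
  have A: "add_ext (Sys E) 0 (1/2) = Sys E'"
    unfolding add_ext_def Sys_def E'_def E_def by (simp add: fun_eq_iff)
  have e: "E 1 = 10" "E 0 = 0" "E 2 = 0" by (simp_all add: E_def)
  have e': "E' 1 = 10" "E' 0 = 1/2" "E' 2 = 0" by (simp_all add: E'_def)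
  have bm: "base_model (Sys E)" by (rule wf) (simp add: E_def)
  have bk: "banks (Sys E) = {0,1,2}" by (simp add: Sys_def)
  note s1 = sol[of 0 E, OF _ _ e(1) e(2) e(3), simplified]
  note s2 = sol[of "1/2" E', OF _ _ e'(1) e'(2) e'(3), simplified]
  have "base_model (Sys E) \<and> (0::nat) \<in> banks (Sys E) \<and> (1::nat) \<in> banks (Sys E) \<and> (0::nat) \<noteq> 1 \<and> (1/2::real) > 0 \<and>
     unique_solution (Sys E) (\<lambda>i. if i = 0 then 0 else 1) \<and>
     unique_solution (add_ext (Sys E) 0 (1/2)) (\<lambda>i. if i = 0 then 1/2 else 1) \<and>
     payoff (add_ext (Sys E) 0 (1/2)) (\<lambda>i. if i = 0 then 1/2 else 1) 1 >
       payoff (Sys E) (\<lambda>i. if i = 0 then 0 else 1) 1 + 1/2"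
    unfolding A using bm bk s1 s2 by simp
  then show ?thesis by blast
qed

end
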